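(* Let $\Delta$ be a geodetic graph and $s$ a positive integer. If every isometrically embedded circuit in $\Delta$ has length at most $2s+1$, then $\Delta$ is $s$-broomlike.
   Context: Graphs are simple and undirected. A graph is geodetic if between any two vertices there is a unique shortest path (geodesic); $d$ denotes the path metric. A path $u_0,\dots,u_n$ is an embedded circuit of length $n$ if $u_0,\dots,u_{n-1}$ are distinct and $u_0=u_n$; it is isometrically embedded if $d(u_i,u_j)=\min\{j-i,n+i-j\}$ for all $0\le i<j<n$ (a path $u,v,u$ with $u,v$ adjacent counts as one of length two). A geodetic graph $\Delta$ is $s$-broomlike if whenever $a_0,\dots,a_{n-1},a_n,b$ is a path of distinct vertices such that $a_0,\dots,a_n$ is a geodesic but $a_0,\dots,a_n,b$ is not, then the geodesic from $a_0$ to $b$ is $a_0,\dots,a_{n-p},b_{n-p+1},\dots,b_n=b$ for some $p\le s$ with $b_{n-p+1}\neq a_{n-p+1}$. *)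

theory Defs
  imports Main
begin

text \<open>A simple undirected graph: vertex set V, symmetric irreflexive edge relation E on V.
Paths (walks) are nonempty vertex lists; a list of n+1 vertices has length n.\<close>

definition simple_graph :: "'a set \<Rightarrow> ('a \<Rightarrow> 'a \<Rightarrow> bool) \<Rightarrow> bool" where
  "simple_graph V E \<longleftrightarrow> (\<forall>u v. E u v \<longrightarrow> u \<in> V \<and> v \<in> V \<and> E v u \<and> u \<noteq> v)"

definition walk :: "'a set \<Rightarrow> ('a \<Rightarrow> 'a \<Rightarrow> bool) \<Rightarrow> 'a list \<Rightarrow> bool" where
  "walk V E xs \<longleftrightarrow> xs \<noteq> [] \<and> set xs \<subseteq> V \<and>
     (\<forall>i. i + 1 < length xs \<longrightarrow> E (xs ! i) (xs ! (i + 1)))"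

definition dist :: "'a set \<Rightarrow> ('a \<Rightarrow> 'a \<Rightarrow> bool) \<Rightarrow> 'a \<Rightarrow> 'a \<Rightarrow> nat" where
  "dist V E u v = (LEAST n. \<exists>xs. walk V E xs \<and> hd xs = u \<and> last xs = v \<and> length xs = n + 1)"

definition geodesic :: "'a set \<Rightarrow> ('a \<Rightarrow> 'a \<Rightarrow> bool) \<Rightarrow> 'a list \<Rightarrow> bool" where
  "geodesic V E xs \<longleftrightarrow> walk V E xs \<and> length xs = dist V E (hd xs) (last xs) + 1"

definition geodetic :: "'a set \<Rightarrow> ('a \<Rightarrow> 'a \<Rightarrow> bool) \<Rightarrow> bool" where
  "geodetic V E \<longleftrightarrow> simple_graph V E \<and>
     (\<forall>u\<in>V. \<forall>v\<in>V. \<exists>!xs. geodesic V E xs \<and> hd xs = u \<and> last xs = v)"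

definition embedded_circuit :: "'a set \<Rightarrow> ('a \<Rightarrow> 'a \<Rightarrow> bool) \<Rightarrow> 'a list \<Rightarrow> bool" where
  "embedded_circuit V E cs \<longleftrightarrow> walk V E cs \<and> distinct (butlast cs) \<and> last cs = hd cs"

definition isometric_circuit :: "'a set \<Rightarrow> ('a \<Rightarrow> 'a \<Rightarrow> bool) \<Rightarrow> 'a list \<Rightarrow> bool" where
  "isometric_circuit V E cs \<longleftrightarrow> embedded_circuit V E cs \<and>
     (let n = length cs - 1 in
       \<forall>i j. i < j \<and> j < n \<longrightarrow> dist V E (cs ! i) (cs ! j) = min (j - i) (n + i - j))"

text \<open>s-broomlike: a = [a_0..a_n] geodesic, a@[b] a path of distinct vertices that is not a
geodesic; then the geodesic g from a_0 to b is a_0..a_{n-p}, b_{n-p+1}..b_n = b with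
1 \<le> p \<le> s and b_{n-p+1} \<noteq> a_{n-p+1}.\<close>
definition broomlike :: "nat \<Rightarrow> 'a set \<Rightarrow> ('a \<Rightarrow> 'a \<Rightarrow> bool) \<Rightarrow> bool" where
  "broomlike s V E \<longleftrightarrow>
     (\<forall>a b. walk V E (a @ [b]) \<and> distinct (a @ [b]) \<and> a \<noteq> [] \<and> geodesic V E a \<and>
        \<not> geodesic V E (a @ [b]) \<longrightarrow>
        (\<forall>g. geodesic V E g \<and> hd g = hd a \<and> last g = b \<longrightarrow>
          (let n = length a - 1 in
            \<exists>p. 0 < p \<and> p \<le> s \<and> p \<le> n \<and> length g = n + 1 \<and>
                take (n - p + 1) g = take (n - p + 1) a \<and>
                g ! (n - p + 1) \<noteq> a ! (n - p + 1))))"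

end

theory Submission
  imports Defs
begin

lemma sg_sym: "simple_graph V E \<Longrightarrow> E u v \<Longrightarrow> E v u"
  unfolding simple_graph_def by blast
lemma sg_V1: "simple_graph V E \<Longrightarrow> E u v \<Longrightarrow> u \<in> V"
  unfolding simple_graph_def by blast
lemma sg_V2: "simple_graph V E \<Longrightarrow> E u v \<Longrightarrow> v \<in> V"
  unfolding simple_graph_def by blast

lemma geo_sg: "geodetic V E \<Longrightarrow> simple_graph V E"
  unfolding geodetic_def by blast

lemma dist_le:
  assumes "walk V E xs" "hd xs = u" "last xs = v"
  shows "dist V E u v \<le> length xs - 1"
proof -
  have "xs \<noteq> []" using assms(1) unfolding walk_def by blast
  then have "length xs = (length xs - 1) + 1" by simp
  then show ?thesis unfolding dist_def using assms by (intro Least_le) blast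
qed

lemma dist_walk:
  assumes "geodetic V E" "u \<in> V" "v \<in> V"
  shows "\<exists>xs. walk V E xs \<and> hd xs = u \<and> last xs = v \<and> length xs = dist V E u v + 1"
proof -
  from assms obtain xs where "geodesic V E xs" "hd xs = u" "last xs = v"
    unfolding geodetic_def by blast
  then show ?thesis unfolding geodesic_def by blast
qed

lemma walk_append:
  assumes "walk V E xs" "walk V E ys" "last xs = hd ys"
  shows "walk V E (xs @ tl ys)"
proof -
  have ne: "xs \<noteq> []" "ys \<noteq> []" using assms unfolding walk_def by auto
  have "set (xs @ tl ys) \<subseteq> V" using assms ne unfolding walk_def
    by (auto dest: list.set_sel(2))
  moreover have "E ((xs @ tl ys) ! i) ((xs @ tl ys) ! (i + 1))" if "i + 1 < length (xs @ tl ys)" for i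
  proof (cases "i + 1 < length xs")
    case True
    then show ?thesis using assms(1) unfolding walk_def by (simp add: nth_append)
  next
    case False
    then have i: "length xs \<le> i + 1" by simp
    show ?thesis
    proof (cases "i + 1 = length xs")
      case True
      have "xs ! i = last xs" using True ne by (simp add: last_conv_nth flip: True)
      also have "\<dots> = ys ! 0" using assms(3) ne by (simp add: hd_conv_nth)
      finally have a: "(xs @ tl ys) ! i = ys ! 0" using True by (simp add: nth_append)
      have b: "(xs @ tl ys) ! (i+1) = ys ! 1" using True that ne by (simp add: nth_append nth_tl)
      have "1 < length ys" using that True by simp
      then show ?thesis using a b assms(2) unfolding walk_def by auto
    next
      case False
      with i have i2: "length xs \<le> i" by simp
      have a: "(xs @ tl ys) ! i = ys ! (i - length xs + 1)" using i2 that
        by (simp add: nth_append nth_tl)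
      have b: "(xs @ tl ys) ! (i+1) = ys ! (i - length xs + 1 + 1)" using i2 that
        by (simp add: nth_append nth_tl Suc_diff_le)
      have "i - length xs + 1 + 1 < length ys" using that i2 by simp
      then show ?thesis using a b assms(2) unfolding walk_def by auto
    qed
  qed
  ultimately show ?thesis using ne unfolding walk_def by simp
qed


lemma walk_rev: "simple_graph V E \<Longrightarrow> walk V E xs \<Longrightarrow> walk V E (rev xs)"
  unfolding walk_def
proof (intro conjI allI impI)
  assume G: "simple_graph V E" and W: "xs \<noteq> [] \<and> set xs \<subseteq> V \<and> (\<forall>i. i + 1 < length xs \<longrightarrow> E (xs ! i) (xs ! (i + 1)))"
  show "rev xs \<noteq> []" "set (rev xs) \<subseteq> V" using W by auto
  fix i assume i: "i + 1 < length (rev xs)"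
  have "E (xs ! (length xs - Suc (Suc i))) (xs ! (length xs - Suc (Suc i) + 1))"
    using W i by auto
  moreover have "length xs - Suc (Suc i) + 1 = length xs - Suc i" using i by simp
  ultimately show "E (rev xs ! i) (rev xs ! (i + 1))" using i G
    by (simp add: rev_nth sg_sym)
qed

lemma dist_sym_le:
  assumes "geodetic V E" "u \<in> V" "v \<in> V"
  shows "dist V E v u \<le> dist V E u v"
proof -
  obtain xs where "walk V E xs" "hd xs = u" "last xs = v" "length xs = dist V E u v + 1"
    using dist_walk[OF assms] by blast
  moreover have "xs \<noteq> []" using calculation unfolding walk_def by blast
  ultimately show ?thesis
    using dist_le[of V E "rev xs" v u] walk_rev[OF geo_sg[OF assms(1)]]
    by (simp add: hd_rev last_rev)
qed

lemma dist_sym: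
  assumes "geodetic V E" "u \<in> V" "v \<in> V"
  shows "dist V E u v = dist V E v u"
  using dist_sym_le assms by (metis le_antisym)

lemma dist_tri:
  assumes "geodetic V E" "u \<in> V" "v \<in> V" "w \<in> V"
  shows "dist V E u w \<le> dist V E u v + dist V E v w"
proof -
  obtain xs where X: "walk V E xs" "hd xs = u" "last xs = v" "length xs = dist V E u v + 1"
    using dist_walk[OF assms(1,2,3)] by blast
  obtain ys where Y: "walk V E ys" "hd ys = v" "last ys = w" "length ys = dist V E v w + 1"
    using dist_walk[OF assms(1,3,4)] by blast
  have ne: "xs \<noteq> []" "ys \<noteq> []" using X Y unfolding walk_def by auto
  have W: "walk V E (xs @ tl ys)" using walk_append[OF X(1) Y(1)] X(3) Y(2) by simp
  have "hd (xs @ tl ys) = u" using X ne by simp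
  moreover have "last (xs @ tl ys) = w"
  proof (cases "tl ys = []")
    case True
    then have "ys = [hd ys]" using ne by (cases ys) auto
    then show ?thesis using True X Y by (metis append.right_neutral last_ConsL)
  next
    case False
    then show ?thesis using Y ne by (simp add: last_tl)
  qed
  ultimately have "dist V E u w \<le> length (xs @ tl ys) - 1" by (rule dist_le[OF W])
  then show ?thesis using X Y ne by simp
qed

lemma dist_self: "u \<in> V \<Longrightarrow> dist V E u u = 0"
  using dist_le[of V E "[u]" u u] unfolding walk_def by simp

lemma dist_zero:
  assumes "geodetic V E" "u \<in> V" "v \<in> V" "dist V E u v = 0"
  shows "u = v"
proof -
  obtain xs where X: "walk V E xs" "hd xs = u" "last xs = v" "length xs = dist V E u v + 1"
    using dist_walk[OF assms(1,2,3)] by blast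
  then have "length xs = 1" using assms by simp
  then obtain z where "xs = [z]" by (cases xs) auto
  then show ?thesis using X by simp
qed

lemma dist_edge:
  assumes "simple_graph V E" "E u v"
  shows "dist V E u v \<le> 1"
  using dist_le[of V E "[u,v]" u v] assms sg_V1[OF assms] sg_V2[OF assms]
  unfolding walk_def by (auto simp: nth_Cons split: nat.splits)

lemma mid_unique:
  assumes G: "geodetic V E" and V: "u \<in> V" "v \<in> V" "x \<in> V" "y \<in> V"
    and 1: "dist V E u v = dist V E u x + dist V E x v"
    and 2: "dist V E u v = dist V E u y + dist V E y v"
    and 3: "dist V E u x = dist V E u y"
  shows "x = y"
proof -
  have key: "\<exists>zs. geodesic V E zs \<and> hd zs = u \<and> last zs = v \<and> zs ! dist V E u z = z"
    if z: "z \<in> V" "dist V E u v = dist V E u z + dist V E z v" for z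
  proof -
    obtain xs where X: "walk V E xs" "hd xs = u" "last xs = z" "length xs = dist V E u z + 1"
      using dist_walk[OF G V(1) z(1)] by blast
    obtain ys where Y: "walk V E ys" "hd ys = z" "last ys = v" "length ys = dist V E z v + 1"
      using dist_walk[OF G z(1) V(2)] by blast
    have ne: "xs \<noteq> []" "ys \<noteq> []" using X Y unfolding walk_def by auto
    have W: "walk V E (xs @ tl ys)" using walk_append[OF X(1) Y(1)] X(3) Y(2) by simp
    have h: "hd (xs @ tl ys) = u" using X ne by simp
    moreover have l: "last (xs @ tl ys) = v"
    proof (cases "tl ys = []")
      case True
      then have "ys = [hd ys]" using ne by (cases ys) auto
      then show ?thesis using True X Y by (metis append.right_neutral last_ConsL)
    next
      case False
      then show ?thesis using Y ne by (simp add: last_tl)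
    qed
    moreover have "geodesic V E (xs @ tl ys)"
      unfolding geodesic_def using W h l X Y ne z(2) by simp
    moreover have "(xs @ tl ys) ! dist V E u z = z"
    proof -
      have "(xs @ tl ys) ! dist V E u z = xs ! (length xs - 1)" using X by (simp add: nth_append)
      also have "\<dots> = z" using X ne by (simp add: last_conv_nth)
      finally show ?thesis .
    qed
    ultimately show ?thesis by blast
  qed
  obtain zs where Z: "geodesic V E zs" "hd zs = u" "last zs = v" "zs ! dist V E u x = x"
    using key[OF V(3) 1] by blast
  obtain zs' where Z': "geodesic V E zs'" "hd zs' = u" "last zs' = v" "zs' ! dist V E u y = y"
    using key[OF V(4) 2] by blast
  have UU: "\<forall>u\<in>V. \<forall>v\<in>V. \<exists>!xs. geodesic V E xs \<and> hd xs = u \<and> last xs = v"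
    using G unfolding geodetic_def by (rule conjunct2)
  have U: "\<exists>!xs. geodesic V E xs \<and> hd xs = u \<and> last xs = v"
    using bspec[OF bspec[OF UU V(1)] V(2)] .
  from U obtain z0 where z0: "\<And>y. geodesic V E y \<and> hd y = u \<and> last y = v \<Longrightarrow> y = z0"
    by (elim ex1E) blast
  have "zs = z0" "zs' = z0" using z0 Z(1,2,3) Z'(1,2,3) by blast+
  then have "zs = zs'" by simp
  then have "zs ! dist V E u x = zs' ! dist V E u y" using 3 by (simp only:)
  then show ?thesis using Z(4) Z'(4) by (simp only:)
qed


context
  fixes V :: "'a set" and E :: "'a \<Rightarrow> 'a \<Rightarrow> bool" and w :: "nat \<Rightarrow> 'a" and p :: nat
  assumes G: "geodetic V E" and p1: "1 \<le> p" and Ew: "\<And>k. E (w k) (w (Suc k))"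
    and per: "\<And>k. w (k + (2*p+1)) = w k"
begin

lemma wV: "w k \<in> V"
  using sg_V1[OF geo_sg[OF G] Ew] .

lemma wtri: "dist V E (w a) (w c) \<le> dist V E (w a) (w b) + dist V E (w b) (w c)"
  using dist_tri[OF G wV wV wV] .

lemma wsym: "dist V E (w a) (w b) = dist V E (w b) (w a)"
  using dist_sym[OF G wV wV] .

lemma wch: "dist V E (w a) (w (a + t)) \<le> t"
proof (induction t)
  case 0
  then show ?case using dist_self[OF wV] by simp
next
  case (Suc t)
  have "dist V E (w a) (w (a + Suc t)) \<le> dist V E (w a) (w (a + t)) + dist V E (w (a+t)) (w (a + Suc t))"
    by (rule wtri)
  moreover have "dist V E (w (a+t)) (w (a + Suc t)) \<le> 1"
    using dist_edge[OF geo_sg[OF G] Ew[of "a+t"]] by simp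
  ultimately show ?case using Suc by simp
qed

lemma wmid:
  assumes "dist V E (w a) (w b) = dist V E (w a) (w x) + dist V E (w x) (w b)"
    "dist V E (w a) (w b) = dist V E (w a) (w y) + dist V E (w y) (w b)"
    "dist V E (w a) (w x) = dist V E (w a) (w y)"
  shows "w x = w y"
  using mid_unique[OF G wV wV wV wV assms] .

lemma wzero: "w a = w b \<Longrightarrow> dist V E (w a) (w b) = 0"
  using dist_self[OF wV] by simp

lemma step:
  assumes D1: "\<forall>i\<le>p. dist V E (w k) (w (k+i)) = i"
    and D2: "\<forall>i\<le>p. dist V E (w k) (w (k + (2*p+1) - i)) = i"
    and N: "w (Suc k) \<noteq> w (k + (2*p+1) - 1)"
  shows "(\<forall>i\<le>p. dist V E (w (Suc k)) (w (Suc k+i)) = i) \<and>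
         (\<forall>i\<le>p. dist V E (w (Suc k)) (w (Suc k + (2*p+1) - i)) = i) \<and>
         w (Suc (Suc k)) \<noteq> w (Suc k + (2*p+1) - 1)"
proof -
  let ?d = "dist V E"
  have dx1: "?d (w k) (w (k+1)) = 1" using D1[rule_format, of 1] p1 by simp
  have dcv: "?d (w k) (w (k+p+1)) = p"
  proof -
    have "k + (2*p+1) - p = k+p+1" by simp
    then show ?thesis using D2[rule_format, of p] by (simp add: ac_simps)
  qed
  have dcy1: "?d (w k) (w (k+2*p)) = 1"
  proof -
    have "k + (2*p+1) - 1 = k+2*p" by simp
    then show ?thesis using D2[rule_format, of 1] p1 by simp
  qed
  have dy1v: "?d (w (k+2*p)) (w (k+p+1)) = p - 1"
  proof -
    have eq: "k+p+1 + (p-1) = k + 2*p" using p1 by simp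
    have a0: "?d (w (k+p+1)) (w (k+2*p)) \<le> p - 1" using wch[of "k+p+1" "p-1"] unfolding eq .
    have a: "?d (w (k+2*p)) (w (k+p+1)) \<le> p - 1" using a0 wsym[of "k+2*p" "k+p+1"] by (simp only:)
    have "?d (w k) (w (k+p+1)) \<le> ?d (w k) (w (k+2*p)) + ?d (w (k+2*p)) (w (k+p+1))" by (rule wtri)
    then show ?thesis using a dcv dcy1 by simp
  qed
  have P1: "\<forall>i\<le>p. ?d (w (Suc k)) (w (Suc k+i)) = i"
  proof (intro allI impI)
    fix i assume i: "i \<le> p"
    have up: "?d (w (Suc k)) (w (Suc k+i)) \<le> i" by (rule wch)
    show "?d (w (Suc k)) (w (Suc k+i)) = i"
    proof (cases "i < p")
      case True
      have "?d (w k) (w (k + (i+1))) = i + 1" using D1[rule_format, of "i+1"] True by simp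
      moreover have "?d (w k) (w (k + (i+1))) \<le> ?d (w k) (w (k+1)) + ?d (w (k+1)) (w (k + (i+1)))"
        by (rule wtri)
      ultimately show ?thesis using up dx1 by simp
    next
      case False
      then have ip: "i = p" using i by simp
      have e: "Suc k + i = k+p+1" using ip by simp
      have lo: "?d (w k) (w (k+p+1)) \<le> ?d (w k) (w (k+1)) + ?d (w (k+1)) (w (k+p+1))"
        by (rule wtri)
      have "?d (w (k+1)) (w (k+p+1)) \<noteq> p - 1"
      proof
        assume h: "?d (w (k+1)) (w (k+p+1)) = p - 1"
        have "w (k+1) = w (k+2*p)"
          by (rule wmid[of k "k+p+1"]) (use h dcv dx1 dcy1 dy1v p1 in auto)
        moreover have "k + (2*p+1) - 1 = k+2*p" by simp
        ultimately show False using N by simp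
      qed
      then show ?thesis using up lo dcv dx1 e ip by simp
    qed
  qed
  have dx1v: "?d (w (k+1)) (w (k+p+1)) = p"
    using P1[rule_format, of p] by simp
  have P2: "\<forall>i\<le>p. ?d (w (Suc k)) (w (Suc k + (2*p+1) - i)) = i"
  proof (intro allI impI)
    fix i assume i: "i \<le> p"
    consider "i = 0" | "i = 1" | "2 \<le> i" by linarith
    then show "?d (w (Suc k)) (w (Suc k + (2*p+1) - i)) = i"
    proof cases
      case 1
      then show ?thesis using per[of "Suc k"] dist_self[OF wV] by simp
    next
      case 2
      have "Suc k + (2*p+1) - i = k + (2*p+1)" using 2 by simp
      then show ?thesis using per[of k] dx1 wsym[of "Suc k" k] 2 by simp
    next
      case 3
      define j where "j = i - 1"
      have j: "1 \<le> j" "j < p" "i = j + 1" using 3 i unfolding j_def by auto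
      have idx: "Suc k + (2*p+1) - i = k + 2*p + 1 - j" using j by simp
      have up: "?d (w (k + 2*p + 1 - j)) (w (Suc k)) \<le> i"
      proof -
        have "?d (w (k + 2*p + 1 - j)) (w (k + 2*p + 1 - j + i)) \<le> i" by (rule wch)
        moreover have "k + 2*p + 1 - j + i = Suc k + (2*p+1)" using j by simp
        ultimately show ?thesis using per[of "Suc k"] by simp
      qed
      have yv: "?d (w (k + 2*p + 1 - j)) (w (k+p+1)) \<le> p - j"
      proof -
        have eq: "k+p+1 + (p - j) = k + 2*p + 1 - j" using j by simp
        have "?d (w (k+p+1)) (w (k + 2*p + 1 - j)) \<le> p - j" using wch[of "k+p+1" "p-j"] unfolding eq .
        then show ?thesis using wsym[of "k+p+1" "k + 2*p + 1 - j"] by (simp only:)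
      qed
      have t1: "?d (w (k+1)) (w (k+p+1)) \<le> ?d (w (k+1)) (w (k + 2*p + 1 - j)) + ?d (w (k + 2*p + 1 - j)) (w (k+p+1))"
        by (rule wtri)
      have ne: "?d (w (k+1)) (w (k + 2*p + 1 - j)) \<noteq> j"
      proof
        assume h: "?d (w (k+1)) (w (k + 2*p + 1 - j)) = j"
        have yv2: "?d (w (k + 2*p + 1 - j)) (w (k+p+1)) = p - j" using t1 h yv dx1v by simp
        have x1: "?d (w (k+1)) (w (k+1+j)) = j" using P1 j by simp
        have xv: "?d (w (k+1+j)) (w (k+p+1)) \<le> p - j"
        proof -
          have "?d (w (k+1+j)) (w (k+1+j + (p-j))) \<le> p - j" by (rule wch)
          moreover have "k+1+j + (p-j) = k+p+1" using j by simp
          ultimately show ?thesis by simp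
        qed
        have "?d (w (k+1)) (w (k+p+1)) \<le> ?d (w (k+1)) (w (k+1+j)) + ?d (w (k+1+j)) (w (k+p+1))"
          by (rule wtri)
        then have xv2: "?d (w (k+1+j)) (w (k+p+1)) = p - j" using xv x1 dx1v by simp
        have "w (k + 2*p + 1 - j) = w (k+1+j)"
          by (rule wmid[of "k+1" "k+p+1"]) (use h yv2 x1 xv2 dx1v j in auto)
        moreover have "?d (w k) (w (k + 2*p + 1 - j)) = j"
        proof -
          have "k + (2*p+1) - j = k + 2*p + 1 - j" by simp
          then show ?thesis using D2[rule_format, of j] j by simp
        qed
        moreover have "?d (w k) (w (k+(1+j))) = 1+j" using D1[rule_format, of "1+j"] j by simp
        ultimately show False by (simp add: add.assoc)
      qed
      have "?d (w (k+1)) (w (k + 2*p + 1 - j)) \<ge> j" using t1 yv dx1v j by linarith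
      with ne have "?d (w (k+1)) (w (k + 2*p + 1 - j)) \<ge> i" using j by simp
      moreover have "?d (w (k+1)) (w (k + 2*p + 1 - j)) \<le> i" using up wsym[of "k + 2*p + 1 - j" "k+1"] by simp
      ultimately show ?thesis using idx by simp
    qed
  qed
  have P3: "w (Suc (Suc k)) \<noteq> w (Suc k + (2*p+1) - 1)"
  proof
    assume h: "w (Suc (Suc k)) = w (Suc k + (2*p+1) - 1)"
    have "Suc k + (2*p+1) - 1 = k + (2*p+1)" by simp
    then have h2: "w (k+2) = w k" using h per[of k] by simp
    show False
    proof (cases "p = 1")
      case True
      have "k + (2*p+1) - 1 = k+2" using True by simp
      then have "?d (w k) (w (k+2)) = 1" using D2[rule_format, of 1] True by simp
      then show False using h2 dist_self[OF wV] by simp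
    next
      case False
      then have "?d (w k) (w (k+2)) = 2" using D1[rule_format, of 2] p1 by simp
      then show False using h2 dist_self[OF wV] by simp
    qed
  qed
  show ?thesis using P1 P2 P3 by blast
qed


lemma allD:
  assumes D1: "\<forall>i\<le>p. dist V E (w 0) (w i) = i"
    and D2: "\<forall>i\<le>p. dist V E (w 0) (w ((2*p+1) - i)) = i"
    and N: "w 1 \<noteq> w (2*p)"
  shows "(\<forall>i\<le>p. dist V E (w k) (w (k+i)) = i) \<and>
         (\<forall>i\<le>p. dist V E (w k) (w (k + (2*p+1) - i)) = i) \<and>
         w (Suc k) \<noteq> w (k + (2*p+1) - 1)"
proof (induction k)
  case 0
  then show ?case using D1 D2 N by simp
next
  case (Suc k)
  then show ?case using step by blast
qed

lemma wdist:
  assumes D1: "\<forall>i\<le>p. dist V E (w 0) (w i) = i"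
    and D2: "\<forall>i\<le>p. dist V E (w 0) (w ((2*p+1) - i)) = i"
    and N: "w 1 \<noteq> w (2*p)"
    and ij: "i < j" "j < 2*p+1"
  shows "dist V E (w i) (w j) = min (j - i) (2*p+1 + i - j)"
proof (cases "j - i \<le> p")
  case True
  have "dist V E (w i) (w (i + (j-i))) = j - i" using allD[OF D1 D2 N, of i] True by blast
  then show ?thesis using True ij by simp
next
  case False
  define t where "t = 2*p+1 + i - j"
  have t: "t \<le> p" "i + (2*p+1) - t = j" using False ij unfolding t_def by auto
  have "dist V E (w i) (w (i + (2*p+1) - t)) = t" using allD[OF D1 D2 N, of i] t by blast
  then show ?thesis using t False ij unfolding t_def by simp
qed

end


lemma tconf:
  fixes x y :: "nat \<Rightarrow> 'a"
  assumes G: "geodetic V E" and p1: "1 \<le> p" and x0: "x 0 = y 0" and x1: "x 1 \<noteq> y 1"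
    and dx: "\<forall>i\<le>p. dist V E (x 0) (x i) = i" and dy: "\<forall>i\<le>p. dist V E (y 0) (y i) = i"
    and Ex: "\<forall>i<p. E (x i) (x (Suc i))" and Ey: "\<forall>i<p. E (y i) (y (Suc i))"
    and Exy: "E (x p) (y p)"
  shows "\<exists>cs. isometric_circuit V E cs \<and> length cs - 1 = 2*p+1"
proof -
  define L where "L = 2*p+1"
  define w where "w k = (let j = k mod L in if j \<le> p then x j else y (L - j))" for k
  have SG: "simple_graph V E" using geo_sg[OF G] .
  have per: "w (k + (2*p+1)) = w k" for k
  proof -
    have "(k + (2*p+1)) mod L = k mod L" unfolding L_def by (rule mod_add_self2)
    then show ?thesis unfolding w_def by (simp only:)
  qed
  have Ew: "E (w k) (w (Suc k))" for k
  proof -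
    define j where "j = k mod L"
    have jL: "j < L" unfolding j_def L_def by simp
    have sj: "Suc k mod L = (if Suc j = L then 0 else Suc j)"
      unfolding j_def by (simp add: mod_Suc)
    have wk: "w k = (if j \<le> p then x j else y (L - j))" unfolding w_def j_def Let_def by simp
    have wsk: "w (Suc k) = (if Suc j = L then x 0 else if Suc j \<le> p then x (Suc j) else y (L - Suc j))"
      unfolding w_def Let_def sj by simp
    have Lp: "L = 2*p+1" by (rule L_def)
    consider "j < p" | "j = p" | "p < j" "Suc j < L" | "Suc j = L" using jL by linarith
    then show ?thesis
    proof cases
      case 1
      then show ?thesis using Ex wk wsk Lp by auto
    next
      case 2
      moreover have "L - Suc j = p" using 2 Lp by simp
      ultimately show ?thesis using Exy wk wsk Lp p1 by auto
    next
      case 3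
      have "E (y (L - Suc j)) (y (Suc (L - Suc j)))" using Ey 3 Lp by auto
      moreover have "Suc (L - Suc j) = L - j" using 3 by simp
      ultimately have "E (y (L - j)) (y (L - Suc j))" using sg_sym[OF SG] by metis
      then show ?thesis using 3 wk wsk by auto
    next
      case 4
      have "E (y 0) (y 1)" using Ey p1 by auto
      then have "E (y 1) (x 0)" using x0 sg_sym[OF SG] by metis
      moreover have "L - j = 1" using 4 by simp
      moreover have "\<not> j \<le> p" using 4 p1 Lp by simp
      ultimately show ?thesis using 4 wk wsk by auto
    qed
  qed
  have D1: "\<forall>i\<le>p. dist V E (w 0) (w i) = i"
    using dx unfolding w_def L_def by simp
  have D2: "\<forall>i\<le>p. dist V E (w 0) (w ((2*p+1) - i)) = i"
  proof (intro allI impI)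
    fix i assume i: "i \<le> p"
    show "dist V E (w 0) (w ((2*p+1) - i)) = i"
    proof (cases "i = 0")
      case True
      have "w (2*p+1) = w 0" using per[of 0] by simp
      then show ?thesis using True dist_self[OF sg_V1[OF SG Ew[of 0]]] by simp
    next
      case False
      have a: "(2*p+1-i) mod L = 2*p+1-i" using False unfolding L_def by simp
      have b: "\<not> (2*p+1-i \<le> p)" "L - (2*p+1-i) = i" using False i unfolding L_def by auto
      have "w (2*p+1-i) = y i" unfolding w_def Let_def a using b by simp
      moreover have "w 0 = y 0" using x0 unfolding w_def L_def by simp
      ultimately show ?thesis using dy i by simp
    qed
  qed
  have N: "w 1 \<noteq> w (2*p)"
  proof -
    have "w 1 = x 1" using p1 unfolding w_def L_def by simp
    moreover have "w (2*p) = y 1"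
    proof -
      have a: "(2*p) mod L = 2*p" unfolding L_def by simp
      have b: "\<not> (2*p \<le> p)" "L - (2*p) = 1" using p1 unfolding L_def by auto
      show ?thesis unfolding w_def Let_def a using b by simp
    qed
    ultimately show ?thesis using x1 by simp
  qed
  have WD: "dist V E (w i) (w j) = min (j - i) (2*p+1 + i - j)" if "i < j" "j < 2*p+1" for i j
    using wdist[OF G p1 Ew per D1 D2 N that] .
  define cs where "cs = map w [0..<2*p+2]"
  have len: "length cs = 2*p+2" unfolding cs_def by simp
  have csn: "cs ! i = w i" if "i < 2*p+2" for i unfolding cs_def using that by (simp del: upt_Suc)
  have wV: "w k \<in> V" for k using sg_V1[OF SG Ew] .
  have walk: "walk V E cs"
    unfolding walk_def using len csn Ew wV unfolding cs_def by auto
  have last: "last cs = hd cs"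
  proof -
    have ne: "cs \<noteq> []" using len by auto
    have "last cs = cs ! (2*p+1)" using ne len by (simp add: last_conv_nth)
    also have "\<dots> = w 0" using csn[of "2*p+1"] per[of 0] by simp
    also have "\<dots> = hd cs" using ne csn[of 0] by (simp add: hd_conv_nth)
    finally show ?thesis .
  qed
  have dist: "distinct (butlast cs)"
  proof -
    have bl: "butlast cs = map w [0..<2*p+1]" unfolding cs_def
      by (simp add: butlast_append)
    have "w i \<noteq> w j" if "i < j" "j < 2*p+1" for i j
    proof
      assume "w i = w j"
      then have "dist V E (w i) (w j) = 0" using dist_self[OF wV] by simp
      then show False using WD[OF that] that by simp
    qed
    then have "inj_on w {0..<2*p+1}" unfolding inj_on_def
      by (metis atLeastLessThan_iff nat_neq_iff)
    then show ?thesis unfolding bl distinct_map by (simp del: upt_Suc)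
  qed
  have iso: "isometric_circuit V E cs"
    unfolding isometric_circuit_def embedded_circuit_def Let_def
    using walk last dist len WD csn by simp
  then show ?thesis using len by auto
qed


lemma walk_chain:
  assumes W: "walk V E xs" and it: "i + t < length xs"
  shows "dist V E (xs ! i) (xs ! (i + t)) \<le> t"
proof -
  let ?ys = "take (t+1) (drop i xs)"
  have len: "length ?ys = t + 1" using it by simp
  have "walk V E ?ys"
    using W it unfolding walk_def
    by (auto dest: in_set_takeD in_set_dropD)
  moreover have "hd ?ys = xs ! i" using it
    by (simp add: hd_take hd_drop_conv_nth)
  moreover have "last ?ys = xs ! (i+t)"
  proof -
    have "?ys \<noteq> []" using len by auto
    then have "last ?ys = ?ys ! t" using len by (simp add: last_conv_nth)
    also have "\<dots> = xs ! (i+t)" using it by simp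
    finally show ?thesis .
  qed
  ultimately have "dist V E (xs ! i) (xs ! (i + t)) \<le> length ?ys - 1" by (rule dist_le)
  then show ?thesis using len by simp
qed

lemma geodesic_sub:
  assumes G: "geodetic V E" and g: "geodesic V E xs" and ij: "i \<le> j" "j < length xs"
  shows "dist V E (xs ! i) (xs ! j) = j - i"
proof -
  have W: "walk V E xs" and L: "length xs = dist V E (hd xs) (last xs) + 1"
    using g unfolding geodesic_def by auto
  have ne: "xs \<noteq> []" using W unfolding walk_def by auto
  have inV: "xs ! k \<in> V" if "k < length xs" for k using W that unfolding walk_def by auto
  have up: "dist V E (xs ! i) (xs ! j) \<le> j - i" using walk_chain[OF W, of i "j - i"] ij by simp
  have a: "dist V E (xs ! 0) (xs ! i) \<le> i" using walk_chain[OF W, of 0 i] ij by simp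
  have b: "dist V E (xs ! j) (xs ! (length xs - 1)) \<le> length xs - 1 - j"
    using walk_chain[OF W, of j "length xs - 1 - j"] ij by simp
  have v0: "xs ! 0 \<in> V" and vi: "xs ! i \<in> V" and vj: "xs ! j \<in> V" and vl: "xs ! (length xs - 1) \<in> V"
    using inV ij ne by auto
  have "dist V E (xs ! 0) (xs ! (length xs - 1)) \<le> dist V E (xs ! 0) (xs ! i) + dist V E (xs ! i) (xs ! (length xs - 1))"
    using dist_tri[OF G v0 vi vl] .
  moreover have "dist V E (xs ! i) (xs ! (length xs - 1)) \<le> dist V E (xs ! i) (xs ! j) + dist V E (xs ! j) (xs ! (length xs - 1))"
    using dist_tri[OF G vi vj vl] .
  moreover have "dist V E (xs ! 0) (xs ! (length xs - 1)) = length xs - 1"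
    using L ne by (simp add: hd_conv_nth last_conv_nth)
  ultimately show ?thesis using up a b ij by linarith
qed


theorem lemma5:
  fixes V :: "'a set" and E :: "'a \<Rightarrow> 'a \<Rightarrow> bool" and s :: nat
  assumes "geodetic V E"
    and "0 < s"
    and "\<forall>cs. isometric_circuit V E cs \<longrightarrow> length cs - 1 \<le> 2 * s + 1"
  shows "broomlike s V E"
  unfolding broomlike_def
proof (intro allI impI)
  note G = assms(1)
  have SG: "simple_graph V E" using geo_sg[OF G] .
  fix a b g
  assume H: "walk V E (a @ [b]) \<and> distinct (a @ [b]) \<and> a \<noteq> [] \<and> geodesic V E a \<and> \<not> geodesic V E (a @ [b])"
  assume Hg: "geodesic V E g \<and> hd g = hd a \<and> last g = b"
  define n where "n = length a - 1"
  have lena: "length a = n + 1" using H unfolding n_def by auto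
  have Wa: "walk V E a" and Wab: "walk V E (a @ [b])" and ga: "geodesic V E a" using H
    unfolding geodesic_def by auto
  have gg: "geodesic V E g" and hg: "hd g = hd a" and lg: "last g = b" using Hg by auto
  have Wg: "walk V E g" using gg unfolding geodesic_def by auto
  have bnot: "b \<notin> set a" using H by auto
  have a0: "hd a = a ! 0" using H by (simp add: hd_conv_nth)
  have an: "last a = a ! n" using H lena by (simp add: last_conv_nth)
  have Eab: "E (a ! n) b"
  proof -
    have "E ((a @ [b]) ! n) ((a @ [b]) ! (n + 1))" using Wab lena unfolding walk_def by auto
    then show ?thesis using lena by (simp add: nth_append)
  qed
  have aV: "a ! k \<in> V" if "k \<le> n" for k using Wa that lena unfolding walk_def by auto
  have bV: "b \<in> V" using sg_V2[OF SG Eab] .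
  have dan: "dist V E (a ! 0) (a ! n) = n" using geodesic_sub[OF G ga, of 0 n] lena by simp
  have dle: "dist V E (a ! 0) b \<le> n"
  proof -
    have "dist V E (hd (a @ [b])) (last (a @ [b])) \<le> length (a @ [b]) - 1"
      using dist_le[OF Wab] by blast
    moreover have "length (a @ [b]) \<noteq> dist V E (hd (a @ [b])) (last (a @ [b])) + 1"
      using H Wab unfolding geodesic_def by blast
    moreover have "hd (a @ [b]) = a ! 0" using H a0 by simp
    ultimately show ?thesis using lena by simp
  qed
  have dge: "dist V E (a ! 0) b \<ge> n"
  proof (rule ccontr)
    assume "\<not> n \<le> dist V E (a ! 0) b"
    then have lt: "dist V E (a ! 0) b < n" by simp
    have t: "dist V E (a ! 0) (a ! n) \<le> dist V E (a ! 0) b + dist V E b (a ! n)"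
      using dist_tri[OF G aV[of 0] bV aV[of n]] by simp
    have e: "dist V E b (a ! n) \<le> 1" using dist_edge[OF SG sg_sym[OF SG Eab]] .
    have d1: "dist V E (a ! 0) b = n - 1" "dist V E b (a ! n) = 1" using t e lt dan by auto
    have d2: "dist V E (a ! 0) (a ! (n-1)) = n - 1" "dist V E (a ! (n-1)) (a ! n) = 1"
      using geodesic_sub[OF G ga, of 0 "n-1"] geodesic_sub[OF G ga, of "n-1" n] lena lt by auto
    have "b = a ! (n-1)"
      by (rule mid_unique[OF G aV[of 0] aV[of n] bV aV[of "n-1"]]) (use d1 d2 dan lt in auto)
    then show False using bnot lena by simp
  qed
  have lenG: "length g = n + 1"
  proof -
    have "length g = dist V E (hd g) (last g) + 1" using gg unfolding geodesic_def by auto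
    then show ?thesis using hg lg a0 dle dge by simp
  qed
  have g0: "g ! 0 = a ! 0" using hg a0 Wg unfolding walk_def by (simp add: hd_conv_nth)
  have gn: "g ! n = b" using lg lenG Wg unfolding walk_def by (simp add: last_conv_nth)
  have ex: "g ! n \<noteq> a ! n" using gn bnot lena by auto
  define m where "m = (LEAST k. g ! k \<noteq> a ! k)"
  have mdiff: "g ! m \<noteq> a ! m" unfolding m_def using LeastI[of "\<lambda>k. g ! k \<noteq> a ! k", OF ex] .
  have mle: "m \<le> n" unfolding m_def using Least_le[of "\<lambda>k. g ! k \<noteq> a ! k", OF ex] .
  have msame: "g ! k = a ! k" if "k < m" for k using not_less_Least[of k "\<lambda>k. g ! k \<noteq> a ! k"] that
    unfolding m_def by blast
  have m0: "m \<noteq> 0" using mdiff g0 by (cases m) auto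
  define p where "p = n + 1 - m"
  have p1: "1 \<le> p" and pn: "p \<le> n" and mp: "n - p + 1 = m" using mle m0 unfolding p_def by auto
  have take_eq: "take (n - p + 1) g = take (n - p + 1) a"
    unfolding mp by (rule nth_equalityI) (use lenG lena mle msame in auto)
  have ps: "p \<le> s"
  proof -
    define x where "x i = a ! (m - 1 + i)" for i
    define y where "y i = g ! (m - 1 + i)" for i
    have gV: "g ! k \<in> V" if "k \<le> n" for k using Wg that lenG unfolding walk_def by auto
    have "\<exists>cs. isometric_circuit V E cs \<and> length cs - 1 = 2*p+1"
    proof (rule tconf[OF G p1])
      show "x 0 = y 0" unfolding x_def y_def using msame m0 by simp
      show "x 1 \<noteq> y 1" unfolding x_def y_def using mdiff m0 by simp
      show "\<forall>i\<le>p. dist V E (x 0) (x i) = i"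
        unfolding x_def using geodesic_sub[OF G ga] lena mle m0 p_def by auto
      show "\<forall>i\<le>p. dist V E (y 0) (y i) = i"
        unfolding y_def using geodesic_sub[OF G gg] lenG mle m0 p_def by auto
      show "\<forall>i<p. E (x i) (x (Suc i))"
      proof (intro allI impI)
        fix i assume "i < p"
        then have "m - 1 + i + 1 < length a" using lena mle m0 unfolding p_def by simp
        then have "E (a ! (m - 1 + i)) (a ! (m - 1 + i + 1))" using Wa unfolding walk_def by blast
        moreover have "m - 1 + i + 1 = m - 1 + Suc i" by simp
        ultimately show "E (x i) (x (Suc i))" unfolding x_def by metis
      qed
      show "\<forall>i<p. E (y i) (y (Suc i))"
      proof (intro allI impI)
        fix i assume "i < p"
        then have "m - 1 + i + 1 < length g" using lenG mle m0 unfolding p_def by simp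
        then have "E (g ! (m - 1 + i)) (g ! (m - 1 + i + 1))" using Wg unfolding walk_def by blast
        moreover have "m - 1 + i + 1 = m - 1 + Suc i" by simp
        ultimately show "E (y i) (y (Suc i))" unfolding y_def by metis
      qed
      have "m - 1 + p = n" using mle m0 unfolding p_def by simp
      then show "E (x p) (y p)" unfolding x_def y_def using Eab gn by simp
    qed
    then obtain cs where "isometric_circuit V E cs" "length cs - 1 = 2*p+1" by blast
    then show ?thesis using assms(3) by fastforce
  qed
  show "let n = length a - 1 in \<exists>p>0. p \<le> s \<and> p \<le> n \<and> length g = n + 1 \<and>
          take (n - p + 1) g = take (n - p + 1) a \<and> g ! (n - p + 1) \<noteq> a ! (n - p + 1)"
    unfolding Let_def n_def[symmetric]
    using p1 ps pn lenG take_eq mdiff mp by (intro exI[of _ p]) auto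
qed

end
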